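(* Let ${\bf w}^*=({\bf x}^*;{\bf z}^* )$ be a P-stationary point of (P) with some $\tau\in(0,\tau_* )$, $\tau_*:=\min\{\tau_1,\tau_2\}$. Assume: $\nabla^2 f({\bf x}^* )$ is nonsingular; $A_{\Gamma_*}$ has full row rank; $H(\Gamma)$ is nonsingular for every $\Gamma\subseteq\Gamma_*$ (equivalently $c_*>0$); and $\nabla^2 f$ is Lipschitz continuous with constant $L_*>0$ on a neighbourhood of ${\bf x}^*$. Let $\rho>0$, $\alpha\in(0,1)$, $0<\mu_{-1}\le c_*/2$, and set $\theta_*:=L_*+2\rho C_*$. Then there exists $\delta>0$ such that, for every initial point ${\bf w}^0\in N({\bf w}^*,\delta)$, the Newton iteration below is well defined for all $k\ge0$ (i.e. $\nabla F_{\mu_k}({\bf w}^k;T_k)$ is nonsingular for every $k$) and: (a) ${\bf d}^k\to0$ and ${\bf w}^k\to{\bf w}^*$; (b) $\|{\bf w}^{k+1}-{\bf w}^*\|\le(\theta_*/c_* )\|{\bf w}^k-{\bf w}^*\|^2$ for all $k\ge0$; (c) $\|F({\bf w}^{k+1};T_{k+1})\|\le\theta_*C_*c_*^{-3}\|F({\bf w}^k;T_k)\|^2$ for all $k\ge0$; moreover, for every $k\ge1$, $\|F({\bf w}^k;T_k)\|\le\theta_*C_*^3c_*^{-3}\,2^{2-2k}\|{\bf w}^0-{\bf w}^*\|^2$, so that for any $\epsilon>0$ and ${\bf w}^0\ne{\bf w}^*$ one has $\|F({\bf w}^k;T_k)\|\le\epsilon$ whenever $k\ge1$ and $k\ge\big\lceil\log_2\big(2\sqrt{\theta_*(C_*/c_*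 )^3}\,\|{\bf w}^0-{\bf w}^*\|\big)-\log_2\sqrt{\epsilon}\,\big\rceil$. The iteration: given ${\bf w}^k=({\bf x}^k;{\bf z}^k)$, set $T_k:={\mathcal S}({\bf w}^k)\cup{\mathcal E}^o({\bf w}^k)$, $\mu_k:=\min\{\alpha\mu_{k-1},\rho\|F({\bf w}^k;T_k)\|\}$, let ${\bf d}^k$ solve $\nabla F_{\mu_k}({\bf w}^k;T_k)\,{\bf d}=-F({\bf w}^k;T_k)$, and set ${\bf w}^{k+1}:={\bf w}^k+{\bf d}^k$.
   Context: Standing setting: problem (P) is $\min_{{\bf x}\in\mathbb{R}^n} f({\bf x})+\lambda\|(A{\bf x}+{\bf b})_+\|_0$ with $f$ twice continuously differentiable, $\lambda>0$, $A\in\mathbb{R}^{m\times n}$ with rows $A_i$, ${\bf b}\in\mathbb{R}^m$; ${\bf z}_+$ componentwise positive part, $\|\cdot\|_0$ counts nonzeros; $A_\Gamma$, ${\bf z}_\Gamma$ row-submatrix/subvector indexed by $\Gamma$, $\overline\Gamma$ complement in $\{1,\dots,m\}$; $\|\cdot\|$ Euclidean/spectral norm, $\sigma_{\min}$ smallest singular value; $N({\bf w}^*,\delta)$ open ball in $\mathbb{R}^{n+m}$. $\mathrm{Prox}_{\alpha\|(\cdot)_+\|_0}({\bf z}):=\arg\min_{{\bf y}}\frac12\|{\bf y}-{\bf z}\|^2+\alpha\|{\bf y}_+\|_0$. $({\bf x}^*,{\bf z}^* )$ is P-stationary with $\tau$ if $\nabla f({\bf x}^* )+A^\top{\bf z}^*=0$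 and $A{\bf x}^*+{\bf b}\in\mathrm{Prox}_{\tau\lambda\|(\cdot)_+\|_0}(A{\bf x}^*+{\bf b}+\tau{\bf z}^* )$. $\Gamma_*:=\{i:A_i{\bf x}^*+b_i=0\}$, ${\bf y}^*:=A{\bf x}^*+{\bf b}$, ${\bf p}^*:=-(A_{\Gamma_*}A_{\Gamma_*}^\top)^{-1}A_{\Gamma_*}\nabla f({\bf x}^* )$; $\tau_1:=+\infty$ if ${\bf y}^*\le0$, else $\min\{(y_i^* )^2/(2\lambda):y_i^*>0\}$; $\tau_2:=+\infty$ if $\Gamma_*=\emptyset$ or ${\bf p}^*=0$, else $2\lambda/\max_i|p_i^*|^2$. Index sets for ${\bf w}=({\bf x};{\bf z})$, $c:=\sqrt{\tau\lambda/2}$: ${\mathcal S}({\bf w})=\{i:|A_i{\bf x}+b_i+\tau z_i-c|<c\}$, ${\mathcal E}^o({\bf w})=\{i:A_i{\bf x}+b_i=0,\ |\tau z_i-c|=c\}$. $F({\bf w};\Gamma):=\big(\nabla f({\bf x})+A_\Gamma^\top{\bf z}_\Gamma;\ A_\Gamma{\bf x}+{\bf b}_\Gamma;\ {\bf z}_{\overline\Gamma}\big)\in\mathbb{R}^{n+m}$; for $\mu\ge0$, $\nabla F_\mu({\bf w};\Gamma)$ is the matrix which, in block form with respect to the variable partition $({\bf x},{\bf z}_\Gamma,{\bf z}_{\overline\Gamma})$, equals $\begin{bmatrix}\nabla^2 f({\bf x}) & A_\Gamma^\top & 0\\ A_\Gamma & -\mu I & 0\\ 0 & 0 & I\end{bmatrix}$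 (so $\nabla F_0$ is the Jacobian of $F(\cdot;\Gamma)$). $H(\Gamma):=\begin{bmatrix}\nabla^2 f({\bf x}^* ) & A_\Gamma^\top\\ A_\Gamma & 0\end{bmatrix}$; $C_*:=2\max\{1,\|H(\Gamma_* )\|\}$, $c_*:=\frac12\min\{1,\min_{\Gamma\subseteq\Gamma_*}\sigma_{\min}(H(\Gamma))\}$. *)

theory Defs
  imports "HOL-Analysis.Analysis"
begin

text \<open>Vectors w = (x;z) in R^(n+m) are represented as real^('n + 'm):
 component Inl i is x_i, component Inr l is z_l.\<close>

definition xpart :: "real^('n::finite + 'm::finite) \<Rightarrow> real^'n" where
  "xpart w = (\<chi> i. w $ Inl i)"

definition zpart :: "real^('n::finite + 'm::finite) \<Rightarrow> real^'m" where
  "zpart w = (\<chi> l. w $ Inr l)"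

definition join :: "real^'n::finite \<Rightarrow> real^'m::finite \<Rightarrow> real^('n + 'm)" where
  "join x z = (\<chi> k. case k of Inl i \<Rightarrow> x $ i | Inr l \<Rightarrow> z $ l)"

definition pos0 :: "real^'m::finite \<Rightarrow> nat" where
  "pos0 y = card {i. y $ i > 0}"

definition proxset :: "real \<Rightarrow> real^'m::finite \<Rightarrow> (real^'m) set" where
  "proxset a z = {y. \<forall>y'. (1/2) * (norm (y - z))\<^sup>2 + a * real (pos0 y)
                         \<le> (1/2) * (norm (y' - z))\<^sup>2 + a * real (pos0 y')}"

text \<open>P-stationarity with parameter tau; g is the gradient of f\<close>
definition Pstationary ::
  "(real^'n \<Rightarrow> real^'n) \<Rightarrow> real^'n::finite^'m::finite \<Rightarrow> real^'m \<Rightarrow> real \<Rightarrow> real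
     \<Rightarrow> real^'n \<Rightarrow> real^'m \<Rightarrow> bool" where
  "Pstationary g A b lam tau x z \<longleftrightarrow>
     g x + transpose A *v z = 0 \<and>
     A *v x + b \<in> proxset (tau * lam) (A *v x + b + tau *\<^sub>R z)"

definition GammaStar :: "real^'n::finite^'m::finite \<Rightarrow> real^'m \<Rightarrow> real^'n \<Rightarrow> 'm set" where
  "GammaStar A b x = {i. (A *v x + b) $ i = 0}"

definition full_row_rank :: "real^'n::finite^'m::finite \<Rightarrow> 'm set \<Rightarrow> bool" where
  "full_row_rank A G \<longleftrightarrow> (\<forall>c. (\<Sum>i\<in>G. c i *\<^sub>R (A $ i)) = 0 \<longrightarrow> (\<forall>i\<in>G. c i = 0))"

text \<open>p* = -(A_G A_G^T)^{-1} A_G grad f(x*), stored as an m-vector supported on G = Gamma_*\<close>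
definition pstar :: "(real^'n \<Rightarrow> real^'n) \<Rightarrow> real^'n::finite^'m::finite \<Rightarrow> real^'m
     \<Rightarrow> real^'n \<Rightarrow> real^'m" where
  "pstar g A b x = (THE p. (\<forall>i. i \<notin> GammaStar A b x \<longrightarrow> p $ i = 0) \<and>
       (\<forall>i\<in>GammaStar A b x. (A $ i) \<bullet> (transpose A *v p) = - ((A $ i) \<bullet> g x)))"

definition tau1 :: "real \<Rightarrow> real^'n::finite^'m::finite \<Rightarrow> real^'m \<Rightarrow> real^'n \<Rightarrow> ereal" where
  "tau1 lam A b x = (let y = A *v x + b in
     if (\<forall>i. y $ i \<le> 0) then \<infinity>
     else ereal (Min {(y $ i)\<^sup>2 / (2 * lam) | i. y $ i > 0}))"

definition tau2 :: "(real^'n \<Rightarrow> real^'n) \<Rightarrow> real \<Rightarrow> real^'n::finite^'m::finite \<Rightarrow> real^'m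
     \<Rightarrow> real^'n \<Rightarrow> ereal" where
  "tau2 g lam A b x = (let p = pstar g A b x in
     if GammaStar A b x = {} \<or> p = 0 then \<infinity>
     else ereal (2 * lam / Max (range (\<lambda>i. \<bar>p $ i\<bar>\<^sup>2))))"

definition Sset :: "real \<Rightarrow> real \<Rightarrow> real^'n::finite^'m::finite \<Rightarrow> real^'m
     \<Rightarrow> real^('n + 'm) \<Rightarrow> 'm set" where
  "Sset tau lam A b w = {i. \<bar>(A *v xpart w + b) $ i + tau * zpart w $ i - sqrt (tau * lam / 2)\<bar>
                           < sqrt (tau * lam / 2)}"

definition Eoset :: "real \<Rightarrow> real \<Rightarrow> real^'n::finite^'m::finite \<Rightarrow> real^'m
     \<Rightarrow> real^('n + 'm) \<Rightarrow> 'm set" where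
  "Eoset tau lam A b w = {i. (A *v xpart w + b) $ i = 0 \<and>
        \<bar>tau * zpart w $ i - sqrt (tau * lam / 2)\<bar> = sqrt (tau * lam / 2)}"

definition Tset :: "real \<Rightarrow> real \<Rightarrow> real^'n::finite^'m::finite \<Rightarrow> real^'m
     \<Rightarrow> real^('n + 'm) \<Rightarrow> 'm set" where
  "Tset tau lam A b w = Sset tau lam A b w \<union> Eoset tau lam A b w"

definition Fv :: "(real^'n \<Rightarrow> real^'n) \<Rightarrow> real^'n::finite^'m::finite \<Rightarrow> real^'m
     \<Rightarrow> real^('n + 'm) \<Rightarrow> 'm set \<Rightarrow> real^('n + 'm)" where
  "Fv g A b w G = (\<chi> k. case k of
      Inl i \<Rightarrow> g (xpart w) $ i + (\<Sum>l\<in>G. A $ l $ i * zpart w $ l)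
    | Inr l \<Rightarrow> (if l \<in> G then (A *v xpart w + b) $ l else zpart w $ l))"

text \<open>The matrix nabla F_mu(w;Gamma); Hf is the Hessian of f\<close>
definition JF :: "(real^'n \<Rightarrow> real^'n^'n) \<Rightarrow> real^'n::finite^'m::finite \<Rightarrow> real
     \<Rightarrow> real^('n + 'm) \<Rightarrow> 'm set \<Rightarrow> real^('n + 'm)^('n + 'm)" where
  "JF Hf A mu w G = (\<chi> r c. case r of
      Inl i \<Rightarrow> (case c of Inl j \<Rightarrow> Hf (xpart w) $ i $ j
                       | Inr l \<Rightarrow> (if l \<in> G then A $ l $ i else 0))
    | Inr l \<Rightarrow> (case c of Inl j \<Rightarrow> (if l \<in> G then A $ l $ j else 0)
                       | Inr l' \<Rightarrow> (if l = l' then (if l \<in> G then - mu else 1) else 0)))"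

text \<open>H(Gamma) at x*, padded with zero rows/columns for indices outside Gamma; it acts on
  the subspace Vsub Gamma = R^n x R^Gamma (z-components outside Gamma vanish).\<close>
definition Hmat :: "(real^'n \<Rightarrow> real^'n^'n) \<Rightarrow> real^'n::finite^'m::finite \<Rightarrow> real^'n
     \<Rightarrow> 'm set \<Rightarrow> real^('n + 'm)^('n + 'm)" where
  "Hmat Hf A x G = (\<chi> r c. case r of
      Inl i \<Rightarrow> (case c of Inl j \<Rightarrow> Hf x $ i $ j
                       | Inr l \<Rightarrow> (if l \<in> G then A $ l $ i else 0))
    | Inr l \<Rightarrow> (case c of Inl j \<Rightarrow> (if l \<in> G then A $ l $ j else 0)
                       | Inr l' \<Rightarrow> 0))"

definition Vsub :: "'m set \<Rightarrow> (real^('n::finite + 'm::finite)) set" where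
  "Vsub G = {v. \<forall>l. l \<notin> G \<longrightarrow> v $ Inr l = 0}"

definition H_nonsingular :: "(real^'n \<Rightarrow> real^'n^'n) \<Rightarrow> real^'n::finite^'m::finite \<Rightarrow> real^'n
     \<Rightarrow> 'm set \<Rightarrow> bool" where
  "H_nonsingular Hf A x G \<longleftrightarrow> (\<forall>v\<in>Vsub G. Hmat Hf A x G *v v = 0 \<longrightarrow> v = 0)"

definition sigma_min_H :: "(real^'n \<Rightarrow> real^'n^'n) \<Rightarrow> real^'n::finite^'m::finite \<Rightarrow> real^'n
     \<Rightarrow> 'm set \<Rightarrow> real" where
  "sigma_min_H Hf A x G = Inf {norm (Hmat Hf A x G *v v) | v. v \<in> Vsub G \<and> norm v = 1}"

definition norm_H :: "(real^'n \<Rightarrow> real^'n^'n) \<Rightarrow> real^'n::finite^'m::finite \<Rightarrow> real^'n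
     \<Rightarrow> 'm set \<Rightarrow> real" where
  "norm_H Hf A x G = onorm (\<lambda>v. Hmat Hf A x G *v v)"

definition C_star :: "(real^'n \<Rightarrow> real^'n^'n) \<Rightarrow> real^'n::finite^'m::finite \<Rightarrow> real^'m
     \<Rightarrow> real^'n \<Rightarrow> real" where
  "C_star Hf A b x = 2 * max 1 (norm_H Hf A x (GammaStar A b x))"

definition c_star :: "(real^'n \<Rightarrow> real^'n^'n) \<Rightarrow> real^'n::finite^'m::finite \<Rightarrow> real^'m
     \<Rightarrow> real^'n \<Rightarrow> real" where
  "c_star Hf A b x = (1/2) * min 1 (Min ((\<lambda>G. sigma_min_H Hf A x G) ` Pow (GammaStar A b x)))"

text \<open>The Newton iteration. State at step k is (w^k, mu_{k-1}).\<close>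
definition mu_next :: "(real^'n \<Rightarrow> real^'n) \<Rightarrow> real^'n::finite^'m::finite \<Rightarrow> real^'m
     \<Rightarrow> real \<Rightarrow> real \<Rightarrow> real \<Rightarrow> real \<Rightarrow> real^('n + 'm) \<Rightarrow> real \<Rightarrow> real" where
  "mu_next g A b tau lam alpha rho w mprev =
     min (alpha * mprev) (rho * norm (Fv g A b w (Tset tau lam A b w)))"

definition newton_dir :: "(real^'n \<Rightarrow> real^'n) \<Rightarrow> (real^'n \<Rightarrow> real^'n^'n)
     \<Rightarrow> real^'n::finite^'m::finite \<Rightarrow> real^'m \<Rightarrow> real \<Rightarrow> real \<Rightarrow> real
     \<Rightarrow> real^('n + 'm) \<Rightarrow> real^('n + 'm)" where
  "newton_dir g Hf A b tau lam mu w =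
     (THE d. JF Hf A mu w (Tset tau lam A b w) *v d = - Fv g A b w (Tset tau lam A b w))"

primrec newton_state :: "(real^'n \<Rightarrow> real^'n) \<Rightarrow> (real^'n \<Rightarrow> real^'n^'n)
     \<Rightarrow> real^'n::finite^'m::finite \<Rightarrow> real^'m \<Rightarrow> real \<Rightarrow> real \<Rightarrow> real \<Rightarrow> real
     \<Rightarrow> real^('n + 'm) \<Rightarrow> real \<Rightarrow> nat \<Rightarrow> (real^('n + 'm)) \<times> real" where
  "newton_state g Hf A b tau lam alpha rho w0 mu0 0 = (w0, mu0)"
| "newton_state g Hf A b tau lam alpha rho w0 mu0 (Suc k) =
     (let w = fst (newton_state g Hf A b tau lam alpha rho w0 mu0 k);
          mu = mu_next g A b tau lam alpha rho w (snd (newton_state g Hf A b tau lam alpha rho w0 mu0 k))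
      in (w + newton_dir g Hf A b tau lam mu w, mu))"

text \<open>w^k, T_k, mu_k, d^k (mu0 is mu_{-1})\<close>
definition newton_w where
  "newton_w g Hf A b tau lam alpha rho w0 mu0 k = fst (newton_state g Hf A b tau lam alpha rho w0 mu0 k)"

definition newton_T where
  "newton_T g Hf A b tau lam alpha rho w0 mu0 k = Tset tau lam A b (newton_w g Hf A b tau lam alpha rho w0 mu0 k)"

definition newton_mu where
  "newton_mu g Hf A b tau lam alpha rho w0 mu0 k =
     mu_next g A b tau lam alpha rho (newton_w g Hf A b tau lam alpha rho w0 mu0 k)
        (snd (newton_state g Hf A b tau lam alpha rho w0 mu0 k))"

definition newton_d where
  "newton_d g Hf A b tau lam alpha rho w0 mu0 k =
     newton_dir g Hf A b tau lam (newton_mu g Hf A b tau lam alpha rho w0 mu0 k)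
        (newton_w g Hf A b tau lam alpha rho w0 mu0 k)"

end

theory Submission
  imports Defs
begin

lemma sum_UNIV_plus: "sum f (UNIV::('a::finite + 'b::finite) set) = sum (\<lambda>i. f (Inl i)) UNIV + sum (\<lambda>j. f (Inr j)) UNIV"
  by (subst UNIV_Plus_UNIV[symmetric], subst sum.Plus) (auto simp: o_def)

lemma xpart_join[simp]: "xpart (join a b) = a" by (simp add: xpart_def join_def vec_eq_iff)
lemma zpart_join[simp]: "zpart (join a b) = b" by (simp add: zpart_def join_def vec_eq_iff)
lemma join_xz: "join (xpart w) (zpart w) = w"
  by (simp add: xpart_def zpart_def join_def vec_eq_iff split: sum.split)
lemma join_add: "join a b + join c d = join (a+c) (b+d)"
  by (simp add: join_def vec_eq_iff split: sum.split)
lemma join_diff: "join a b - join c d = join (a-c) (b-d)"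
  by (simp add: join_def vec_eq_iff split: sum.split)
lemma join_minus: "- join a b = join (-a) (-b)"
  by (simp add: join_def vec_eq_iff split: sum.split)
lemma join_scale: "r *\<^sub>R join a b = join (r *\<^sub>R a) (r *\<^sub>R b)"
  by (simp add: join_def vec_eq_iff split: sum.split)
lemma join_zero: "join 0 0 = 0"
  by (simp add: join_def vec_eq_iff split: sum.split)
lemma join_eq_iff: "join a b = join c d \<longleftrightarrow> a = c \<and> b = d"
  by (metis xpart_join zpart_join)
lemma inner_join: "join a b \<bullet> join c d = a \<bullet> c + b \<bullet> d"
  by (simp add: inner_vec_def sum_UNIV_plus join_def)
lemma norm_join_sq: "(norm (join a b))\<^sup>2 = (norm a)\<^sup>2 + (norm b)\<^sup>2"
  by (simp add: power2_norm_eq_inner inner_join)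
lemma norm_join_ge1: "norm a \<le> norm (join a b)"
  by (metis norm_join_sq le_add_same_cancel1 zero_le_power2 norm_ge_zero power2_le_imp_le)
lemma norm_join_ge2: "norm b \<le> norm (join a b)"
  by (metis norm_join_sq le_add_same_cancel2 zero_le_power2 norm_ge_zero power2_le_imp_le)
lemma norm_join_le: "norm (join a b) \<le> norm a + norm b"
proof (rule power2_le_imp_le)
  show "(norm (join a b))\<^sup>2 \<le> (norm a + norm b)\<^sup>2"
    unfolding norm_join_sq by (simp add: power2_sum)
qed simp
lemma norm_xpart_le: "norm (xpart w) \<le> norm w" by (metis join_xz norm_join_ge1)
lemma norm_zpart_le: "norm (zpart w) \<le> norm w" by (metis join_xz norm_join_ge2)

lemma ifz1: "(if P then x else 0) * (y::real) = (if P then x*y else 0)" by simp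
lemma ifz2: "(y::real) * (if P then x else 0) = (if P then y*x else 0)" by simp

lemma sum_if_G: "(\<Sum>j\<in>UNIV. if j \<in> G then f j else 0) = sum f (G::'a::finite set)"
  by (simp add: sum.If_cases)

definition rG :: "'m set \<Rightarrow> real^'m::finite \<Rightarrow> real^'m" where
  "rG G v = (\<chi> l. if l \<in> G then v $ l else 0)"

lemma JF_join: "JF Hf A mu w G *v join u v = join (Hf (xpart w) *v u + transpose A *v rG G v)
   (rG G (A *v u) - mu *\<^sub>R rG G v + (v - rG G v))"
  by (simp add: vec_eq_iff JF_def join_def rG_def matrix_vector_mult_def sum_UNIV_plus
      transpose_def ifz1 ifz2 sum_if_G split: sum.split)

lemma Hmat_join: "Hmat Hf A x G *v join u v = join (Hf x *v u + transpose A *v rG G v) (rG G (A *v u))"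
  by (simp add: vec_eq_iff Hmat_def join_def rG_def matrix_vector_mult_def sum_UNIV_plus
      transpose_def ifz1 ifz2 sum_if_G split: sum.split)

lemma Fv_join: "Fv g A b w G = join (g (xpart w) + transpose A *v rG G (zpart w))
   (rG G (A *v xpart w + b) + (zpart w - rG G (zpart w)))"
  by (simp add: vec_eq_iff Fv_def join_def rG_def matrix_vector_mult_def sum_UNIV_plus
      transpose_def ifz1 ifz2 sum_if_G split: sum.split)

lemma Vsub_join: "join u v \<in> Vsub G \<longleftrightarrow> rG G v = v"
  by (auto simp: Vsub_def join_def rG_def vec_eq_iff)

lemma rG_idem[simp]: "rG G (rG G v) = rG G v" by (simp add: rG_def vec_eq_iff)
lemma rG_sub: "T \<subseteq> G \<Longrightarrow> rG G (rG T v) = rG T v" by (auto simp: rG_def vec_eq_iff)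
lemma rG_add: "rG G (a + b) = rG G a + rG G b" by (simp add: rG_def vec_eq_iff)
lemma rG_diff: "rG G (a - b) = rG G a - rG G b" by (simp add: rG_def vec_eq_iff)
lemma rG_scale: "rG G (r *\<^sub>R a) = r *\<^sub>R rG G a" by (simp add: rG_def vec_eq_iff)
lemma rG_zero[simp]: "rG G 0 = 0" by (simp add: rG_def vec_eq_iff)
lemma rG_orth: "rG G a \<bullet> (v - rG G v) = 0"
  by (auto simp: rG_def inner_vec_def intro!: sum.neutral)
lemma norm_rG_mono: "T \<subseteq> G \<Longrightarrow> norm (rG T v) \<le> norm (rG G v)"
  by (rule norm_le_componentwise_cart) (auto simp: rG_def)
lemma norm_rG_le: "norm (rG G v) \<le> norm v"
  by (rule norm_le_componentwise_cart) (auto simp: rG_def)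
lemma norm_split_sq: "(norm v)\<^sup>2 = (norm (rG G v))\<^sup>2 + (norm (v - rG G v))\<^sup>2"
proof -
  have "v = rG G v + (v - rG G v)" by simp
  hence "(norm v)\<^sup>2 = (norm (rG G v + (v - rG G v)))\<^sup>2" by simp
  also have "\<dots> = (norm (rG G v))\<^sup>2 + (norm (v - rG G v))\<^sup>2"
    by (rule norm_add_Pythagorean) (simp add: orthogonal_def rG_orth)
  finally show ?thesis .
qed
lemma norm_add_rG_sq: "(norm (rG G a + (v - rG G v)))\<^sup>2 = (norm (rG G a))\<^sup>2 + (norm (v - rG G v))\<^sup>2"
  by (rule norm_add_Pythagorean) (simp add: orthogonal_def rG_orth)

lemma sigma_bound:
  assumes "v \<in> Vsub G"
  shows "sigma_min_H Hf A x G * norm v \<le> norm (Hmat Hf A x G *v v)"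
proof (cases "v = 0")
  case True thus ?thesis by simp
next
  case False
  let ?u = "(1 / norm v) *\<^sub>R v"
  have nv: "norm v > 0" using False by simp
  have "?u \<in> Vsub G" using assms by (simp add: Vsub_def)
  moreover have "norm ?u = 1" using nv by simp
  ultimately have mem: "norm (Hmat Hf A x G *v ?u) \<in> {norm (Hmat Hf A x G *v v) | v. v \<in> Vsub G \<and> norm v = 1}"
    by blast
  have "sigma_min_H Hf A x G \<le> norm (Hmat Hf A x G *v ?u)"
    unfolding sigma_min_H_def by (rule cInf_lower[OF mem]) (rule bdd_belowI[where m=0], auto)
  also have "\<dots> = norm (Hmat Hf A x G *v v) / norm v"
    by (simp add: matrix_vector_mult_scaleR divide_inverse_commute)
  finally show ?thesis using nv by (simp add: field_simps)
qed

lemma J0_lower: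
  assumes s: "0 \<le> s" "s \<le> 1" "s \<le> sigma_min_H Hf A (xpart w) T"
  shows "s * norm v \<le> norm (JF Hf A 0 w T *v v)"
proof -
  obtain u z where v: "v = join u z" by (metis join_xz)
  let ?z1 = "rG T z"
  let ?z2 = "z - rG T z"
  let ?H = "Hmat Hf A (xpart w) T"
  have vs: "join u ?z1 \<in> Vsub T" by (simp add: Vsub_join)
  have Jv: "JF Hf A 0 w T *v v = join (Hf (xpart w) *v u + transpose A *v rG T z) (rG T (A *v u) + ?z2)"
    by (simp add: v JF_join)
  have Hv: "?H *v join u ?z1 = join (Hf (xpart w) *v u + transpose A *v rG T z) (rG T (A *v u))"
    by (simp add: Hmat_join)
  have "(norm (JF Hf A 0 w T *v v))\<^sup>2 = (norm (?H *v join u ?z1))\<^sup>2 + (norm ?z2)\<^sup>2"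
    unfolding Jv Hv norm_join_sq norm_add_rG_sq by simp
  moreover have "(s * norm (join u ?z1))\<^sup>2 \<le> (norm (?H *v join u ?z1))\<^sup>2"
  proof (rule power_mono)
    show "s * norm (join u ?z1) \<le> norm (?H *v join u ?z1)"
      using sigma_bound[OF vs, of Hf A "xpart w"] s
      by (meson mult_right_mono norm_ge_zero order_trans)
  qed (use s in simp)
  moreover have "(s * norm ?z2)\<^sup>2 \<le> (norm ?z2)\<^sup>2"
    by (rule power_mono) (use s in \<open>simp_all add: mult_left_le_one_le\<close>)
  moreover have "(norm v)\<^sup>2 = (norm (join u ?z1))\<^sup>2 + (norm ?z2)\<^sup>2"
    by (simp add: v norm_join_sq norm_split_sq[of z T])
  ultimately have "(s * norm v)\<^sup>2 \<le> (norm (JF Hf A 0 w T *v v))\<^sup>2"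
    by (simp only: power_mult_distrib) (simp add: distrib_left)
  thus ?thesis by (rule power2_le_imp_le) simp
qed

lemma J_pert:
  "JF Hf A mu w T *v v - JF Hf A 0 w' T *v v
     = join ((Hf (xpart w) - Hf (xpart w')) *v xpart v) (- mu *\<^sub>R rG T (zpart v))"
proof -
  obtain u z where v: "v = join u z" by (metis join_xz)
  show ?thesis by (simp add: v JF_join join_diff matrix_vector_mult_diff_rdistrib)
qed

lemma J_pert_norm:
  assumes "onorm (\<lambda>v. (Hf (xpart w) - Hf (xpart w')) *v v) \<le> K" "0 \<le> mu"
  shows "norm (JF Hf A mu w T *v v - JF Hf A 0 w' T *v v) \<le> (K + mu) * norm v"
proof -
  have "norm (JF Hf A mu w T *v v - JF Hf A 0 w' T *v v)
     \<le> norm ((Hf (xpart w) - Hf (xpart w')) *v xpart v) + norm (- mu *\<^sub>R rG T (zpart v))"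
    unfolding J_pert by (rule norm_join_le)
  also have "norm ((Hf (xpart w) - Hf (xpart w')) *v xpart v) \<le> K * norm v"
  proof -
    have "norm ((Hf (xpart w) - Hf (xpart w')) *v xpart v)
        \<le> onorm (\<lambda>v. (Hf (xpart w) - Hf (xpart w')) *v v) * norm (xpart v)"
      by (rule onorm[OF matrix_vector_mul_bounded_linear])
    also have "\<dots> \<le> K * norm v"
      using assms(1) norm_xpart_le[of v]
      by (meson mult_mono onorm_pos_le[OF matrix_vector_mul_bounded_linear] norm_ge_zero order_trans)
    finally show ?thesis .
  qed
  also have "norm (- mu *\<^sub>R rG T (zpart v)) \<le> mu * norm v"
    using assms(2) norm_rG_le[of T "zpart v"] norm_zpart_le[of v]
    by (simp add: mult_left_mono)
  finally show ?thesis by (simp add: distrib_right)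
qed

lemma taylor_bound:
  fixes g :: "real^'n::finite \<Rightarrow> real^'n"
  assumes hess: "\<And>x. (g has_derivative (\<lambda>h. Hf x *v h)) (at x)"
    and lip: "\<forall>x\<in>ball xs r. \<forall>y\<in>ball xs r. onorm (\<lambda>v. (Hf x - Hf y) *v v) \<le> L * dist x y"
    and x: "x \<in> ball xs r" and y: "y \<in> ball xs r" and L: "0 \<le> L"
  shows "norm (g y - g x - Hf x *v (y - x)) \<le> L * (norm (y - x))\<^sup>2"
proof -
  let ?S = "closed_segment x y"
  have S: "?S \<subseteq> ball xs r" by (rule closed_segment_subset[OF x y convex_ball])
  have "norm (g y - g x - (\<lambda>h. Hf x *v h) (y - x)) \<le> norm (y - x) * (L * norm (y - x))"
  proof (rule differentiable_bound_linearization[where S="?S" and f'="\<lambda>x h. Hf x *v h"])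
    fix t :: real assume t: "t \<in> {0..1}"
    have "x + t *\<^sub>R (y - x) = (1 - t) *\<^sub>R x + t *\<^sub>R y" by (simp add: algebra_simps)
    thus "x + t *\<^sub>R (y - x) \<in> ?S" using t unfolding closed_segment_def by auto
  next
    fix z assume "z \<in> ?S"
    show "(g has_derivative (\<lambda>h. Hf z *v h)) (at z within ?S)"
      by (rule has_derivative_at_withinI[OF hess])
  next
    fix z assume z: "z \<in> ?S"
    have eq: "(\<lambda>h. Hf z *v h) - (\<lambda>h. Hf x *v h) = (\<lambda>v. (Hf z - Hf x) *v v)"
      by (simp add: fun_eq_iff matrix_vector_mult_diff_rdistrib)
    have "onorm (\<lambda>v. (Hf z - Hf x) *v v) \<le> L * dist z x"
    proof -
      have "z \<in> ball xs r" using S z by blast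
      thus ?thesis using lip x by auto
    qed
    also have "dist z x \<le> norm (y - x)"
      using dist_in_closed_segment[OF z] by (simp add: dist_norm norm_minus_commute)
    hence "L * dist z x \<le> L * norm (y - x)"
      by (rule mult_left_mono) (rule L)
    finally show "onorm ((\<lambda>h. Hf z *v h) - (\<lambda>h. Hf x *v h)) \<le> L * norm (y - x)"
      unfolding eq .
  next
    show "x \<in> ?S" by simp
  qed
  thus ?thesis by (simp add: power2_eq_square mult_ac)
qed

lemma F_diff:
  "Fv g A b w T - Fv g A b w' T - JF Hf A 0 w'' T *v (w - w')
     = join (g (xpart w) - g (xpart w') - Hf (xpart w'') *v (xpart w - xpart w')) 0"
proof -
  obtain u z where w: "w = join u z" by (metis join_xz)
  obtain u' z' where w': "w' = join u' z'" by (metis join_xz)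
  show ?thesis
    apply (simp add: w w' Fv_join JF_join join_diff join_eq_iff matrix_vector_mult_diff_distrib rG_diff rG_add)
    done
qed

lemma J0_upper:
  assumes TG: "T \<subseteq> G"
  shows "norm (JF Hf A 0 w T *v v) \<le> max 1 (norm_H Hf A (xpart w) G) * norm v"
proof -
  obtain u z where v: "v = join u z" by (metis join_xz)
  let ?z1 = "rG T z"
  let ?z2 = "z - rG T z"
  let ?H = "Hmat Hf A (xpart w) T"
  let ?HG = "Hmat Hf A (xpart w) G"
  let ?M = "max 1 (norm_H Hf A (xpart w) G)"
  have Jv: "JF Hf A 0 w T *v v = join (Hf (xpart w) *v u + transpose A *v rG T z) (rG T (A *v u) + ?z2)"
    by (simp add: v JF_join)
  have Hv: "?H *v join u ?z1 = join (Hf (xpart w) *v u + transpose A *v rG T z) (rG T (A *v u))"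
    by (simp add: Hmat_join)
  have HGv: "?HG *v join u ?z1 = join (Hf (xpart w) *v u + transpose A *v rG T z) (rG G (A *v u))"
    by (simp add: Hmat_join rG_sub[OF TG])
  have e1: "(norm (JF Hf A 0 w T *v v))\<^sup>2 = (norm (?H *v join u ?z1))\<^sup>2 + (norm ?z2)\<^sup>2"
    unfolding Jv Hv norm_join_sq norm_add_rG_sq by simp
  have "norm (?H *v join u ?z1) \<le> norm (?HG *v join u ?z1)"
    unfolding Hv HGv
    by (rule power2_le_imp_le) (simp_all add: norm_join_sq power_mono norm_rG_mono[OF TG])
  also have "\<dots> \<le> norm_H Hf A (xpart w) G * norm (join u ?z1)"
    unfolding norm_H_def by (rule onorm) (rule matrix_vector_mul_bounded_linear)
  also have "\<dots> \<le> ?M * norm (join u ?z1)" by (simp add: mult_right_mono)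
  finally have a: "(norm (?H *v join u ?z1))\<^sup>2 \<le> (?M * norm (join u ?z1))\<^sup>2"
    by (rule power_mono) simp
  have b: "(norm ?z2)\<^sup>2 \<le> (?M * norm ?z2)\<^sup>2"
    by (rule power_mono) (simp_all add: mult_le_cancel_right1)
  have "(norm v)\<^sup>2 = (norm (join u ?z1))\<^sup>2 + (norm ?z2)\<^sup>2"
    by (simp add: v norm_join_sq norm_split_sq[of z T])
  hence "(norm (JF Hf A 0 w T *v v))\<^sup>2 \<le> (?M * norm v)\<^sup>2"
    using a b e1 by (simp only: power_mult_distrib) (simp add: distrib_left)
  thus ?thesis by (rule power2_le_imp_le) simp
qed

lemma cont_xpart: "continuous_on S (xpart :: real^('n::finite+'m::finite) \<Rightarrow> real^'n)"
  unfolding xpart_def by (intro continuous_on_vec_lambda continuous_intros)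
lemma cont_zpart: "continuous_on S (zpart :: real^('n::finite+'m::finite) \<Rightarrow> real^'m)"
  unfolding zpart_def by (intro continuous_on_vec_lambda continuous_intros)
lemma cont_phi: "isCont (\<lambda>w. (A *v xpart w + b) $ i + tau * zpart w $ i) p"
proof -
  have "continuous_on UNIV (\<lambda>w. A *v xpart w)"
    by (rule continuous_on_compose2[OF matrix_vector_mult_linear_continuous_on cont_xpart]) auto
  hence "continuous_on UNIV (\<lambda>w. (A *v xpart w + b) $ i + tau * zpart w $ i)"
    by (intro continuous_intros cont_zpart) auto
  thus ?thesis by (simp add: continuous_on_eq_continuous_at)
qed
lemma cont_y: fixes p :: "real^('n::finite + 'k::finite)"
  shows "isCont (\<lambda>w. (A *v xpart w + b) $ i) p"
proof -
  have "continuous_on UNIV (\<lambda>w::real^('n + 'k). A *v xpart w)"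
    by (rule continuous_on_compose2[OF matrix_vector_mult_linear_continuous_on cont_xpart]) auto
  hence "continuous_on UNIV (\<lambda>w::real^('n + 'k). (A *v xpart w + b) $ i)"
    by (intro continuous_intros) auto
  thus ?thesis by (simp add: continuous_on_eq_continuous_at)
qed

lemma card_pos_split:
  "real (card {j. (x::real^'m::finite) $ j > 0}) = real (card {j. j \<noteq> i \<and> x $ j > 0}) + (if x $ i > 0 then 1 else 0)"
proof (cases "x $ i > 0")
  case True
  hence "{j. x $ j > 0} = insert i {j. j \<noteq> i \<and> x $ j > 0}" by auto
  thus ?thesis using True by (simp add: card_insert_disjoint)
next
  case False
  hence "{j. x $ j > 0} = {j. j \<noteq> i \<and> x $ j > 0}" by auto
  thus ?thesis using False by simp
qed

lemma normsq_split:
  "(norm (x::real^'m::finite))\<^sup>2 = (x $ i)\<^sup>2 + (\<Sum>j\<in>UNIV - {i}. (x $ j)\<^sup>2)"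
proof -
  have "(norm x)\<^sup>2 = x \<bullet> x" by (rule power2_norm_eq_inner)
  also have "\<dots> = (\<Sum>j\<in>UNIV. (x $ j)\<^sup>2)" by (simp add: inner_vec_def power2_eq_square)
  also have "\<dots> = (x $ i)\<^sup>2 + (\<Sum>j\<in>UNIV - {i}. (x $ j)\<^sup>2)" by (simp add: sum.remove[of UNIV i])
  finally show ?thesis .
qed

lemma prox_coord:
  assumes "y \<in> proxset a v"
  shows "(1/2)*(y$i - v$i)\<^sup>2 + a * (if y$i > 0 then 1 else 0) \<le> (1/2)*(t - v$i)\<^sup>2 + a*(if t > 0 then 1 else 0)"
proof -
  define y' where "y' = (\<chi> j. if j = i then t else y $ j)"
  have "(1/2) * (norm (y - v))\<^sup>2 + a * real (pos0 y) \<le> (1/2) * (norm (y' - v))\<^sup>2 + a * real (pos0 y')"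
    using assms unfolding proxset_def by blast
  hence opt: "(1/2) * (norm (y - v))\<^sup>2 + a * real (pos0 y) \<le> (1/2) * (norm (y' - v))\<^sup>2 + a * real (pos0 y')" .
  have s1: "(\<Sum>j\<in>UNIV - {i}. ((y' - v) $ j)\<^sup>2) = (\<Sum>j\<in>UNIV - {i}. ((y - v) $ j)\<^sup>2)"
    by (rule sum.cong) (auto simp: y'_def)
  have s2: "{j. j \<noteq> i \<and> y' $ j > 0} = {j. j \<noteq> i \<and> y $ j > 0}" by (auto simp: y'_def)
  have yi: "y' $ i = t" by (simp add: y'_def)
  have n1: "(norm (y' - v))\<^sup>2 = (t - v $ i)\<^sup>2 + (\<Sum>j\<in>UNIV - {i}. ((y - v) $ j)\<^sup>2)"
    using normsq_split[of "y' - v" i] s1 yi by simp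
  have n2: "(norm (y - v))\<^sup>2 = (y $ i - v $ i)\<^sup>2 + (\<Sum>j\<in>UNIV - {i}. ((y - v) $ j)\<^sup>2)"
    using normsq_split[of "y - v" i] by simp
  have c1: "real (pos0 y') = real (card {j. j \<noteq> i \<and> y $ j > 0}) + (if t > 0 then 1 else 0)"
    unfolding pos0_def using card_pos_split[of y' i] s2 yi by simp
  have c2: "real (pos0 y) = real (card {j. j \<noteq> i \<and> y $ j > 0}) + (if y $ i > 0 then 1 else 0)"
    unfolding pos0_def using card_pos_split[of y i] by simp
  show ?thesis using opt unfolding n1 n2 c1 c2 by (simp add: algebra_simps)
qed


lemma stat_coord:
  assumes P: "y \<in> proxset a (y + tau *\<^sub>R z)" and a: "a > 0" and tau: "tau > 0"
  shows "y$i > 0 \<Longrightarrow> z$i = 0 \<and> 2*a \<le> (y$i)\<^sup>2"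
    and "y$i < 0 \<Longrightarrow> z$i = 0"
    and "y$i = 0 \<Longrightarrow> 0 \<le> z$i \<and> (tau * z$i)\<^sup>2 \<le> 2*a"
proof -
  have h1: "(1/2)*(tau * z$i)\<^sup>2 + a * (if y$i > 0 then 1 else 0) \<le> a*(if y$i + tau * z$i > 0 then 1 else 0)"
    using prox_coord[OF P, of i "y$i + tau * z$i"] by (simp add: power2_eq_square)
  have h0: "(1/2)*(tau * z$i)\<^sup>2 + a * (if y$i > 0 then 1 else 0) \<le> (1/2)*(y$i + tau * z$i)\<^sup>2"
  proof -
    have e: "(0 - (y + tau *\<^sub>R z) $ i)\<^sup>2 = (y$i + tau * z$i)\<^sup>2" by (simp add: power2_eq_square algebra_simps)
    have e2: "(y $ i - (y + tau *\<^sub>R z) $ i)\<^sup>2 = (tau * z$i)\<^sup>2" by (simp add: power2_eq_square)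
    show ?thesis using prox_coord[OF P, of i 0] unfolding e e2 by simp
  qed
  have sq: "0 \<le> (tau * z$i)\<^sup>2" by simp
  {
    assume yp: "y$i > 0"
    have "(tau * z$i)\<^sup>2 \<le> 0"
    proof (cases "y$i + tau * z$i > 0")
      case True thus ?thesis using h1 yp by simp
    next
      case False thus ?thesis using h1 yp a sq by simp
    qed
    hence "tau * z$i = 0" by simp
    hence zi: "z$i = 0" using tau by simp
    thus "z$i = 0 \<and> 2*a \<le> (y$i)\<^sup>2" using h0 yp by simp
  }
  {
    assume yn: "y$i < 0"
    show "z$i = 0"
    proof (cases "y$i + tau * z$i > 0")
      case False
      hence "(tau * z$i)\<^sup>2 \<le> 0" using h1 yn by simp
      thus ?thesis using tau by simp
    next
      case True
      have "0 < tau * z$i" using True yn by linarith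
      hence "(y$i + tau * z$i)\<^sup>2 < (tau * z$i)\<^sup>2"
        using True yn by (intro power_strict_mono) auto
      thus ?thesis using h0 yn by simp
    qed
  }
  {
    assume y0: "y$i = 0"
    show "0 \<le> z$i \<and> (tau * z$i)\<^sup>2 \<le> 2*a"
    proof (cases "tau * z$i > 0")
      case True
      thus ?thesis using h1 y0 tau by (simp add: zero_less_mult_iff)
    next
      case False
      hence "(tau * z$i)\<^sup>2 \<le> 0" using h1 y0 by simp
      thus ?thesis using tau a by simp
    qed
  }
qed


lemma transpose_sum: "transpose A *v q = (\<Sum>i\<in>UNIV. q$i *\<^sub>R (A$i))"
  by (simp add: vec_eq_iff matrix_vector_mult_def transpose_def sum_component mult.commute)

lemma pstar_eq:
  assumes st: "g xs + transpose A *v zs = 0"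
    and supp: "\<forall>i. i \<notin> GammaStar A b xs \<longrightarrow> zs$i = 0"
    and fr: "full_row_rank A (GammaStar A b xs)"
  shows "pstar g A b xs = zs"
  unfolding pstar_def
proof (rule the_equality)
  have "transpose A *v zs = - g xs" using st by (simp add: eq_neg_iff_add_eq_0 add.commute)
  thus "(\<forall>i. i \<notin> GammaStar A b xs \<longrightarrow> zs $ i = 0) \<and>
    (\<forall>i\<in>GammaStar A b xs. A $ i \<bullet> (transpose A *v zs) = - (A $ i \<bullet> g xs))"
    using supp by simp
next
  fix p assume p: "(\<forall>i. i \<notin> GammaStar A b xs \<longrightarrow> p $ i = 0) \<and>
    (\<forall>i\<in>GammaStar A b xs. A $ i \<bullet> (transpose A *v p) = - (A $ i \<bullet> g xs))"
  let ?G = "GammaStar A b xs"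
  define q where "q = p - zs"
  have tz: "transpose A *v zs = - g xs" using st by (simp add: eq_neg_iff_add_eq_0 add.commute)
  have q0: "\<forall>i. i \<notin> ?G \<longrightarrow> q $ i = 0" using p supp by (simp add: q_def)
  have qG: "\<forall>i\<in>?G. A $ i \<bullet> (transpose A *v q) = 0"
    using p tz by (simp add: q_def matrix_vector_mult_diff_distrib inner_diff_right inner_add_right del: transpose_matrix_vector)
  have "(transpose A *v q) \<bullet> (transpose A *v q) = (\<Sum>i\<in>UNIV. q$i * ((transpose A *v q) \<bullet> A$i))"
    by (subst (2) transpose_sum) (simp add: inner_sum_right)
  also have "\<dots> = 0"
    by (rule sum.neutral) (use q0 qG in \<open>auto simp: inner_commute\<close>)
  finally have "transpose A *v q = 0" by simp
  hence "(\<Sum>i\<in>UNIV. q$i *\<^sub>R (A$i)) = 0" by (simp only: transpose_sum)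
  moreover have "(\<Sum>i\<in>UNIV. q$i *\<^sub>R (A$i)) = (\<Sum>i\<in>?G. q$i *\<^sub>R (A$i))"
    by (rule sum.mono_neutral_right) (use q0 in auto)
  ultimately have "\<forall>i\<in>?G. q$i = 0" using fr unfolding full_row_rank_def by metis
  hence "q = 0" using q0 by (simp add: vec_eq_iff) metis
  thus "p = zs" by (simp add: q_def)
qed

lemma tau_strict:
  assumes stat: "Pstationary g A b lam tau xs zs" and lam: "lam > 0" and tau: "tau > 0"
    and tau_lt: "ereal tau < min (tau1 lam A b xs) (tau2 g lam A b xs)"
    and fr: "full_row_rank A (GammaStar A b xs)"
  shows "g xs + transpose A *v zs = 0"
    and "\<forall>i. i \<notin> GammaStar A b xs \<longrightarrow> zs$i = 0"
    and "\<And>i. (A *v xs + b)$i > 0 \<Longrightarrow> 2*(tau*lam) < ((A *v xs + b)$i)\<^sup>2"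
    and "\<And>i. (A *v xs + b)$i = 0 \<Longrightarrow> 0 \<le> zs$i \<and> (tau * zs$i)\<^sup>2 < 2*(tau*lam)"
proof -
  let ?y = "A *v xs + b"
  have a: "tau * lam > 0" using tau lam by simp
  have st: "g xs + transpose A *v zs = 0" and P: "?y \<in> proxset (tau*lam) (?y + tau *\<^sub>R zs)"
    using stat unfolding Pstationary_def by auto
  show "g xs + transpose A *v zs = 0" by (rule st)
  note sc = stat_coord[OF P a tau]
  show supp: "\<forall>i. i \<notin> GammaStar A b xs \<longrightarrow> zs$i = 0"
  proof (intro allI impI)
    fix i assume "i \<notin> GammaStar A b xs"
    hence "?y$i > 0 \<or> ?y$i < 0" by (auto simp: GammaStar_def)
    thus "zs$i = 0" using sc(1,2) by blast
  qed
  have t1: "ereal tau < tau1 lam A b xs" and t2: "ereal tau < tau2 g lam A b xs"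
    using tau_lt by auto
  show "2*(tau*lam) < (?y$i)\<^sup>2" if yp: "?y$i > 0" for i
  proof -
    let ?S = "{(?y $ j)\<^sup>2 / (2 * lam) | j. ?y $ j > 0}"
    have "\<not> (\<forall>j. ?y $ j \<le> 0)" using yp by (meson not_le)
    hence "tau1 lam A b xs = ereal (Min ?S)" unfolding tau1_def Let_def by simp
    hence "tau < Min ?S" using t1 by simp
    moreover have "?S = (\<lambda>j. (?y $ j)\<^sup>2 / (2 * lam)) ` {j. ?y $ j > 0}" by auto
    hence "finite ?S" by simp
    hence "Min ?S \<le> (?y $ i)\<^sup>2 / (2 * lam)" using yp by (intro Min_le) auto
    ultimately have "tau < (?y $ i)\<^sup>2 / (2 * lam)" by simp
    thus ?thesis using lam by (simp add: field_simps)
  qed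
  show "0 \<le> zs$i \<and> (tau * zs$i)\<^sup>2 < 2*(tau*lam)" if y0: "?y$i = 0" for i
  proof -
    have z0: "0 \<le> zs$i" using sc(3)[OF y0] by simp
    show ?thesis
    proof (cases "zs = 0")
      case True thus ?thesis using a by simp
    next
      case False
      then obtain j where j: "zs$j \<noteq> 0" by (metis vec_eq_iff zero_index)
      hence jG: "j \<in> GammaStar A b xs" using supp by blast
      have ps: "pstar g A b xs = zs" using pstar_eq[of g xs A zs b] st supp fr by blast
      let ?M = "Max (range (\<lambda>i. \<bar>zs $ i\<bar>\<^sup>2))"
      have "tau2 g lam A b xs = ereal (2 * lam / ?M)"
        unfolding tau2_def Let_def ps using False jG by auto
      hence tl: "tau < 2 * lam / ?M" using t2 by simp
      have Mi: "\<bar>zs $ i\<bar>\<^sup>2 \<le> ?M" by (rule Max_ge) auto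
      have Mj: "\<bar>zs $ j\<bar>\<^sup>2 \<le> ?M" by (rule Max_ge) auto
      have Mpos: "?M > 0" using Mj j using zero_less_power2[of "\<bar>zs $ j\<bar>"] by linarith
      have "tau * ?M < 2 * lam" using tl Mpos by (simp add: field_simps)
      moreover have "tau * \<bar>zs$i\<bar>\<^sup>2 \<le> tau * ?M" using Mi tau by (intro mult_left_mono) auto
      ultimately have "tau * (zs$i)\<^sup>2 < 2 * lam" by simp
      hence "tau * (tau * (zs$i)\<^sup>2) < tau * (2 * lam)" using tau by simp
      hence "(tau * zs$i)\<^sup>2 < 2*(tau*lam)" by (simp add: power_mult_distrib power2_eq_square algebra_simps)
      thus ?thesis using z0 by simp
    qed
  qed
qed


lemma ident:
  assumes stat: "Pstationary g A b lam tau xs zs" and lam: "lam > 0" and tau: "tau > 0"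
    and tau_lt: "ereal tau < min (tau1 lam A b xs) (tau2 g lam A b xs)"
    and fr: "full_row_rank A (GammaStar A b xs)"
  shows "\<exists>d>0. \<forall>w. dist w (join xs zs) < d \<longrightarrow>
     Tset tau lam A b w \<subseteq> GammaStar A b xs \<and> (\<forall>i. i \<notin> Tset tau lam A b w \<longrightarrow> zs$i = 0)"
proof -
  note ts = tau_strict[OF stat lam tau tau_lt fr]
  let ?y = "A *v xs + b"
  let ?ws = "join xs zs"
  define c where "c = sqrt (tau*lam/2)"
  have a: "tau * lam > 0" using tau lam by simp
  have c0: "c > 0" using a by (simp add: c_def)
  have c2: "(2*c)\<^sup>2 = 2*(tau*lam)" using a by (simp add: c_def power_mult_distrib)
  define phi where "phi = (\<lambda>i w. (A *v xpart w + b) $ i + tau * zpart w $ i)"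
  define yy where "yy = (\<lambda>i (w::real^('a+'b)). (A *v xpart w + b) $ i)"
  define Q where "Q = (\<lambda>w i. (?y$i > 0 \<longrightarrow> phi i w > 2*c \<and> yy i w > 0) \<and>
      (?y$i < 0 \<longrightarrow> phi i w < 0 \<and> yy i w < 0) \<and>
      (?y$i = 0 \<and> zs$i \<noteq> 0 \<longrightarrow> 0 < phi i w \<and> phi i w < 2*c))"
  have phiws: "phi i ?ws = ?y$i + tau * zs$i" for i by (simp add: phi_def)
  have yyws: "yy i ?ws = ?y$i" for i by (simp add: yy_def)
  have Qws: "Q ?ws i" for i
  proof -
    have A1: "?y$i > 2*c" if "?y$i > 0"
    proof -
      have "(2*c)\<^sup>2 < (?y$i)\<^sup>2" by (subst c2) (rule ts(3)[OF that])
      thus ?thesis using that c0 by (meson power_less_imp_less_base less_le_not_le order_less_le)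
    qed
    have A3: "0 < tau * zs$i \<and> tau * zs$i < 2*c" if "?y$i = 0" "zs$i \<noteq> 0"
    proof -
      have "0 \<le> zs$i" using ts(4)[OF that(1)] by auto
      moreover have "(tau * zs$i)\<^sup>2 < (2*c)\<^sup>2" by (subst c2) (use ts(4)[OF that(1)] in auto)
      ultimately show ?thesis using that(2) tau c0
        by (smt (verit) mult_pos_pos power_less_imp_less_base)
    qed
    show ?thesis unfolding Q_def phiws yyws using A1 A3 ts(2) by (auto simp: GammaStar_def)
  qed
  have tphi: "(phi i \<longlongrightarrow> phi i ?ws) (at ?ws)" for i
    unfolding phi_def by (rule isContD[OF cont_phi])
  have tyy: "(yy i \<longlongrightarrow> yy i ?ws) (at ?ws)" for i
    unfolding yy_def by (rule isContD[OF cont_y])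
  have ev: "eventually (\<lambda>w. Q w i) (at ?ws)" for i
  proof -
    consider "?y$i > 0" | "?y$i < 0" | "?y$i = 0 \<and> zs$i \<noteq> 0" | "?y$i = 0 \<and> zs$i = 0" by linarith
    thus ?thesis
    proof cases
      case 1
      have "eventually (\<lambda>w. phi i w > 2*c \<and> yy i w > 0) (at ?ws)"
        using Qws[of i] 1 unfolding Q_def
        by (intro eventually_conj order_tendstoD(1)[OF tphi] order_tendstoD(1)[OF tyy]) (auto simp: phiws yyws)
      thus ?thesis by (rule eventually_mono) (use 1 in \<open>auto simp: Q_def\<close>)
    next
      case 2
      have "eventually (\<lambda>w. phi i w < 0 \<and> yy i w < 0) (at ?ws)"
        using Qws[of i] 2 unfolding Q_def
        by (intro eventually_conj order_tendstoD(2)[OF tphi] order_tendstoD(2)[OF tyy]) (auto simp: phiws yyws)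
      thus ?thesis by (rule eventually_mono) (use 2 in \<open>auto simp: Q_def\<close>)
    next
      case 3
      have "eventually (\<lambda>w. 0 < phi i w \<and> phi i w < 2*c) (at ?ws)"
        using Qws[of i] 3 unfolding Q_def
        by (intro eventually_conj order_tendstoD(1)[OF tphi] order_tendstoD(2)[OF tphi]) (auto simp: phiws yyws)
      thus ?thesis by (rule eventually_mono) (use 3 in \<open>auto simp: Q_def\<close>)
    next
      case 4
      thus ?thesis by (auto simp: Q_def)
    qed
  qed
  have "eventually (\<lambda>w. \<forall>i. Q w i) (at ?ws)" by (rule eventually_all_finite) (rule ev)
  then obtain d where d: "d > 0" "\<forall>w. w \<noteq> ?ws \<and> dist w ?ws < d \<longrightarrow> (\<forall>i. Q w i)"
    unfolding eventually_at by auto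
  have QQ: "\<forall>i. Q w i" if "dist w ?ws < d" for w
    using d Qws that by (cases "w = ?ws") auto
  have concl: "Tset tau lam A b w \<subseteq> GammaStar A b xs \<and> (\<forall>i. i \<notin> Tset tau lam A b w \<longrightarrow> zs$i = 0)"
    if Qw: "\<forall>i. Q w i" for w
  proof
    have Sdef: "i \<in> Sset tau lam A b w \<longleftrightarrow> 0 < phi i w \<and> phi i w < 2*c" for i
      unfolding Sset_def phi_def c_def[symmetric] by (auto simp: abs_less_iff)
    have Edef: "i \<in> Eoset tau lam A b w \<Longrightarrow> yy i w = 0" for i
      unfolding Eoset_def yy_def by auto
    show "Tset tau lam A b w \<subseteq> GammaStar A b xs"
    proof
      fix i assume iT: "i \<in> Tset tau lam A b w"
      have "\<not> ?y$i > 0"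
      proof
        assume "?y$i > 0"
        hence "phi i w > 2*c \<and> yy i w > 0" using Qw unfolding Q_def by blast
        thus False using iT Sdef Edef unfolding Tset_def by fastforce
      qed
      moreover have "\<not> ?y$i < 0"
      proof
        assume "?y$i < 0"
        hence "phi i w < 0 \<and> yy i w < 0" using Qw unfolding Q_def by blast
        thus False using iT Sdef Edef unfolding Tset_def by fastforce
      qed
      ultimately show "i \<in> GammaStar A b xs" by (simp add: GammaStar_def)
    qed
    show "\<forall>i. i \<notin> Tset tau lam A b w \<longrightarrow> zs$i = 0"
    proof (intro allI impI)
      fix i assume iT: "i \<notin> Tset tau lam A b w"
      show "zs$i = 0"
      proof (rule ccontr)
        assume nz: "zs$i \<noteq> 0"
        hence "?y$i = 0" using ts(2) by (auto simp: GammaStar_def)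
        hence "0 < phi i w \<and> phi i w < 2*c" using Qw nz unfolding Q_def by blast
        thus False using iT Sdef unfolding Tset_def by blast
      qed
    qed
  qed
  show ?thesis using d(1) QQ concl by blast
qed

lemma solve_the:
  fixes M :: "real^'k::finite^'k"
  assumes "invertible M"
  shows "M *v (THE d. M *v d = y) = y"
proof -
  obtain M' where M': "M ** M' = mat 1" "M' ** M = mat 1" using assms unfolding invertible_def by auto
  have "\<exists>!d. M *v d = y"
  proof
    show "M *v (M' *v y) = y" by (simp add: matrix_vector_mul_assoc M')
  next
    fix d assume "M *v d = y"
    hence "M' *v (M *v d) = M' *v y" by simp
    thus "d = M' *v y" by (simp add: matrix_vector_mul_assoc M')
  qed
  thus ?thesis by (rule theI')
qed

lemma lower_invertible:
  fixes M :: "real^'k::finite^'k"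
  assumes "\<And>v. c * norm v \<le> norm (M *v v)" "c > 0"
  shows "invertible M"
  unfolding invertible_left_inverse matrix_left_invertible_ker
proof (intro allI impI)
  fix x assume "M *v x = 0"
  hence "c * norm x \<le> 0" using assms(1)[of x] by simp
  thus "x = 0" using assms(2) by (simp add: mult_le_0_iff)
qed

lemma newton_w_0: "newton_w g Hf A b tau lam alpha rho w0 mu0 0 = w0"
  by (simp add: newton_w_def)
lemma newton_w_Suc: "newton_w g Hf A b tau lam alpha rho w0 mu0 (Suc k) =
   newton_w g Hf A b tau lam alpha rho w0 mu0 k + newton_d g Hf A b tau lam alpha rho w0 mu0 k"
  by (simp add: newton_w_def newton_d_def newton_mu_def Let_def)
lemma newton_s_0: "snd (newton_state g Hf A b tau lam alpha rho w0 mu0 0) = mu0"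
  by simp
lemma newton_s_Suc: "snd (newton_state g Hf A b tau lam alpha rho w0 mu0 (Suc k)) =
   newton_mu g Hf A b tau lam alpha rho w0 mu0 k"
  by (simp add: newton_w_def newton_mu_def Let_def)
lemma xpart_diff: "xpart (a - b) = xpart a - xpart b" by (simp add: xpart_def vec_eq_iff)
lemma zpart_diff: "zpart (a - b) = zpart a - zpart b" by (simp add: zpart_def vec_eq_iff)

lemma arithA: fixes Cs th cs N :: real assumes "cs > 0"
  shows "Cs * (th / cs * (N / cs)\<^sup>2) = th * Cs / cs ^ 3 * N\<^sup>2"
  using assms by (simp add: power2_eq_square power3_eq_cube mult_ac)
lemma arithB: fixes Cs th cs a :: real
  shows "Cs * (th / cs * ((1/2)^j * a)\<^sup>2) = (th * Cs / cs) * (1/2::real)^(2*j) * a\<^sup>2"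
proof -
  have "((1/2::real)^j * a)\<^sup>2 = (1/2::real)^(2*j) * a\<^sup>2" by (simp add: power_mult_distrib power_mult[symmetric] mult.commute)
  thus ?thesis by simp
qed
lemma arithC: fixes K a e k :: real assumes "K > 0" "e > 0"
  and "(2 * sqrt K * a / sqrt e)\<^sup>2 \<le> (2 powr k)\<^sup>2"
  shows "4 * K * a\<^sup>2 / e \<le> 2 powr (2 * k)"
proof -
  have l: "(2 * sqrt K * a / sqrt e)\<^sup>2 = 4 * K * a\<^sup>2 / e"
    using assms by (simp add: power_divide power_mult_distrib)
  have r: "(2 powr k)\<^sup>2 = 2 powr (2 * k)"
    by (simp add: power2_eq_square powr_add[symmetric])
  show ?thesis using assms(3) unfolding l r .
qed

theorem theorem4p2:
  fixes f :: "real^'n::finite \<Rightarrow> real"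
    and g :: "real^'n \<Rightarrow> real^'n"
    and Hf :: "real^'n \<Rightarrow> real^'n^'n"
    and A :: "real^'n^'m::finite" and b :: "real^'m"
    and lam tau rho alpha mu0 L :: real
    and xs :: "real^'n" and zs :: "real^'m"
  assumes grad: "\<And>x. (f has_derivative (\<lambda>h. g x \<bullet> h)) (at x)"
    and hess: "\<And>x. (g has_derivative (\<lambda>h. Hf x *v h)) (at x)"
    and hess_cont: "continuous_on UNIV Hf"
    and lam_pos: "lam > 0"
    and stat: "Pstationary g A b lam tau xs zs"
    and tau_pos: "tau > 0"
    and tau_lt: "ereal tau < min (tau1 lam A b xs) (tau2 g lam A b xs)"
    and hess_nonsing: "invertible (Hf xs)"
    and full_rank: "full_row_rank A (GammaStar A b xs)"
    and H_nonsing: "\<forall>G \<subseteq> GammaStar A b xs. H_nonsingular Hf A xs G"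
    and L_pos: "L > 0"
    and lipschitz: "\<exists>r>0. \<forall>x\<in>ball xs r. \<forall>y\<in>ball xs r.
                       onorm (\<lambda>v. (Hf x - Hf y) *v v) \<le> L * dist x y"
    and rho_pos: "rho > 0"
    and alpha: "0 < alpha" "alpha < 1"
    and mu0: "0 < mu0" "mu0 \<le> c_star Hf A b xs / 2"
  shows "\<exists>\<delta>>0. \<forall>w0. dist w0 (join xs zs) < \<delta> \<longrightarrow>
    (let ws = join xs zs; Cs = C_star Hf A b xs; cs = c_star Hf A b xs;
         th = L + 2 * rho * Cs;
         w = newton_w g Hf A b tau lam alpha rho w0 mu0;
         T = newton_T g Hf A b tau lam alpha rho w0 mu0;
         mu = newton_mu g Hf A b tau lam alpha rho w0 mu0;
         d = newton_d g Hf A b tau lam alpha rho w0 mu0;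
         Fk = (\<lambda>k. Fv g A b (w k) (T k))
     in (\<forall>k. invertible (JF Hf A (mu k) (w k) (T k))) \<and>
        (\<forall>k. JF Hf A (mu k) (w k) (T k) *v d k = - Fk k \<and> w (Suc k) = w k + d k) \<and>
        d \<longlonglongrightarrow> 0 \<and> w \<longlonglongrightarrow> ws \<and>
        (\<forall>k. norm (w (Suc k) - ws) \<le> (th / cs) * (norm (w k - ws))\<^sup>2) \<and>
        (\<forall>k. norm (Fk (Suc k)) \<le> th * Cs / cs ^ 3 * (norm (Fk k))\<^sup>2) \<and>
        (\<forall>k\<ge>1. norm (Fk k) \<le> th * Cs ^ 3 / cs ^ 3 * 2 powr (2 - 2 * real k) * (norm (w0 - ws))\<^sup>2) \<and>
        (\<forall>\<epsilon>>0. w0 \<noteq> ws \<longrightarrow> (\<forall>k. k \<ge> 1 \<and>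
            int k \<ge> \<lceil>log 2 (2 * sqrt (th * (Cs / cs) ^ 3) * norm (w0 - ws)) - log 2 (sqrt \<epsilon>)\<rceil>
            \<longrightarrow> norm (Fk k) \<le> \<epsilon>)))"
proof -
  let ?ws = "join xs zs"
  let ?G = "GammaStar A b xs"
  let ?T = "Tset tau lam A b"
  let ?F = "\<lambda>w. Fv g A b w (Tset tau lam A b w)"
  define cs where "cs = c_star Hf A b xs"
  define Cs where "Cs = C_star Hf A b xs"
  define th where "th = L + 2 * rho * Cs"
  define M where "M = max 1 (norm_H Hf A xs ?G)"
  have cs_pos: "cs > 0" using mu0 by (simp add: cs_def)
  have M1: "M \<ge> 1" by (simp add: M_def)
  have Cs_eq: "Cs = 2 * M" by (simp add: Cs_def M_def C_star_def)
  have finP: "finite ((\<lambda>G. sigma_min_H Hf A xs G) ` Pow ?G)" by simp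
  have sig: "2 * cs \<le> sigma_min_H Hf A xs T" if "T \<subseteq> ?G" for T
  proof -
    have "2 * cs = min 1 (Min ((\<lambda>G. sigma_min_H Hf A xs G) ` Pow ?G))" by (simp add: cs_def c_star_def)
    also have "\<dots> \<le> Min ((\<lambda>G. sigma_min_H Hf A xs G) ` Pow ?G)" by simp
    also have "\<dots> \<le> sigma_min_H Hf A xs T" using that finP by (intro Min_le) auto
    finally show ?thesis .
  qed
  have cs1: "2 * cs \<le> 1" by (simp add: cs_def c_star_def)
  have "rho * Cs > 0" using rho_pos M1 Cs_eq by simp
  hence th_pos: "th > 0" using L_pos by (simp add: th_def)
  have L0: "0 \<le> L" using L_pos by simp
  have gz: "g xs + transpose A *v zs = 0"
    using tau_strict(1)[OF stat lam_pos tau_pos tau_lt full_rank] .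
  obtain d1 where d1: "d1 > 0" "\<forall>w. dist w ?ws < d1 \<longrightarrow> ?T w \<subseteq> ?G \<and> (\<forall>i. i \<notin> ?T w \<longrightarrow> zs$i = 0)"
    using ident[OF stat lam_pos tau_pos tau_lt full_rank] by blast
  obtain r where r: "r > 0" and lip: "\<forall>x\<in>ball xs r. \<forall>y\<in>ball xs r. onorm (\<lambda>v. (Hf x - Hf y) *v v) \<le> L * dist x y"
    using lipschitz by blast
  define \<delta> where "\<delta> = min (min d1 r) (min (cs/(2*L)) (cs/(2*th)))"
  have \<delta>pos: "\<delta> > 0" using d1 r cs_pos L_pos th_pos by (simp add: \<delta>_def)
  have \<delta>1: "\<delta> \<le> d1" "\<delta> \<le> r" by (auto simp: \<delta>_def)
  have \<delta>L: "L * \<delta> \<le> cs / 2"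
  proof -
    have "\<delta> \<le> cs/(2*L)" by (simp add: \<delta>_def)
    thus ?thesis using L_pos by (simp add: field_simps)
  qed
  have \<delta>th: "th * \<delta> \<le> cs / 2"
  proof -
    have "\<delta> \<le> cs/(2*th)" by (simp add: \<delta>_def)
    thus ?thesis using th_pos by (simp add: field_simps)
  qed
  have Tsub: "?T w \<subseteq> ?G" and Fws: "Fv g A b ?ws (?T w) = 0" if "norm (w - ?ws) < \<delta>" for w
  proof -
    have "dist w ?ws < d1" using that \<delta>1 by (simp add: dist_norm)
    hence TG: "?T w \<subseteq> ?G" and zT: "\<forall>i. i \<notin> ?T w \<longrightarrow> zs$i = 0" using d1 by auto
    show "?T w \<subseteq> ?G" by (rule TG)
    have e1: "rG (?T w) zs = zs" using zT by (auto simp: rG_def vec_eq_iff)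
    have e2: "rG (?T w) (A *v xs + b) = 0" using TG by (auto simp: rG_def vec_eq_iff GammaStar_def)
    show "Fv g A b ?ws (?T w) = 0"
      unfolding Fv_join using gz by (simp add: e1 e2 join_zero del: transpose_matrix_vector)
  qed
  have xb: "xpart w \<in> ball xs r" "norm (xpart w - xs) \<le> norm (w - ?ws)" if "norm (w - ?ws) < \<delta>" for w
  proof -
    have "norm (xpart w - xs) = norm (xpart (w - ?ws))" by (simp add: xpart_diff)
    also have "\<dots> \<le> norm (w - ?ws)" by (rule norm_xpart_le)
    finally show "norm (xpart w - xs) \<le> norm (w - ?ws)" .
    thus "xpart w \<in> ball xs r" using that \<delta>1 by (simp add: dist_norm norm_minus_commute)
  qed
  have xsb: "xs \<in> ball xs r" using r by simp
  have Fb: "cs * norm (w - ?ws) \<le> norm (?F w) \<and> norm (?F w) \<le> Cs * norm (w - ?ws)"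
    if wd: "norm (w - ?ws) < \<delta>" for w
  proof -
    let ?e = "w - ?ws"
    let ?Tw = "?T w"
    let ?R = "g (xpart w) - g xs - Hf xs *v (xpart w - xs)"
    have FD: "?F w - Fv g A b ?ws ?Tw - JF Hf A 0 ?ws ?Tw *v ?e = join ?R 0"
      using F_diff[of g A b w ?Tw ?ws Hf ?ws] by simp
    hence FE: "?F w = JF Hf A 0 ?ws ?Tw *v ?e + join ?R 0" using Fws[OF wd] by (simp add: algebra_simps)
    have nR: "norm ?R \<le> L * (norm (xpart w - xs))\<^sup>2"
      using taylor_bound[OF hess lip xsb xb(1)[OF wd] L0] .
    have "L * (norm (xpart w - xs))\<^sup>2 \<le> L * (norm ?e)\<^sup>2"
      using xb(2)[OF wd] L0 by (intro mult_left_mono power_mono) auto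
    also have "\<dots> = (L * norm ?e) * norm ?e" by (simp add: power2_eq_square)
    also have "\<dots> \<le> (cs/2) * norm ?e"
    proof (rule mult_right_mono)
      have "L * norm ?e \<le> L * \<delta>" using wd L0 by (intro mult_left_mono) auto
      thus "L * norm ?e \<le> cs / 2" using \<delta>L by linarith
    qed simp
    finally have nR1: "L * (norm (xpart w - xs))\<^sup>2 \<le> (cs/2) * norm ?e" .
    have j0: "norm (join ?R (0::real^'m)) \<le> norm ?R" using norm_join_le[of ?R "0::real^'m"] by simp
    have nR2: "norm (join ?R (0::real^'m)) \<le> (cs/2) * norm ?e" using j0 nR nR1 by linarith
    have lo: "2 * cs * norm ?e \<le> norm (JF Hf A 0 ?ws ?Tw *v ?e)"
      by (rule J0_lower) (use cs_pos cs1 sig[OF Tsub[OF wd]] in auto)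
    have up: "norm (JF Hf A 0 ?ws ?Tw *v ?e) \<le> M * norm ?e"
      using J0_upper[OF Tsub[OF wd], where Hf=Hf and A=A and w="?ws" and v="?e"] by (simp add: M_def)
    have "norm (JF Hf A 0 ?ws ?Tw *v ?e) - norm (join ?R (0::real^'m)) \<le> norm (?F w)"
      unfolding FE by (metis norm_diff_ineq add.commute norm_minus_cancel diff_minus_eq_add)
    moreover have "norm (?F w) \<le> norm (JF Hf A 0 ?ws ?Tw *v ?e) + norm (join ?R (0::real^'m))"
      unfolding FE by (rule norm_triangle_ineq)
    moreover have "cs / 2 * norm ?e \<le> M * norm ?e" using cs1 M1 by (intro mult_right_mono) auto
    ultimately show ?thesis using lo up nR2 Cs_eq by (simp add: algebra_simps)
  qed
  have Jlow: "cs * norm v \<le> norm (JF Hf A mu w (?T w) *v v)"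
    if wd: "norm (w - ?ws) < \<delta>" and mu: "0 \<le> mu" "mu \<le> cs / 2" for w mu v
  proof -
    have lo: "2 * cs * norm v \<le> norm (JF Hf A 0 ?ws (?T w) *v v)"
      by (rule J0_lower) (use cs_pos cs1 sig[OF Tsub[OF wd]] in auto)
    have on: "onorm (\<lambda>v. (Hf (xpart w) - Hf (xpart ?ws)) *v v) \<le> cs / 2"
    proof -
      have "onorm (\<lambda>v. (Hf (xpart w) - Hf xs) *v v) \<le> L * dist (xpart w) xs"
        using lip xb(1)[OF wd] xsb by blast
      also have "\<dots> \<le> L * \<delta>" using xb(2)[OF wd] wd L0 by (intro mult_left_mono) (auto simp: dist_norm)
      finally show ?thesis using \<delta>L by simp
    qed
    have pn: "norm (JF Hf A mu w (?T w) *v v - JF Hf A 0 ?ws (?T w) *v v) \<le> (cs/2 + mu) * norm v"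
      by (rule J_pert_norm[OF on mu(1)])
    have "(cs/2 + mu) * norm v \<le> cs * norm v" using mu by (intro mult_right_mono) auto
    thus ?thesis using lo pn norm_triangle_ineq2[of "JF Hf A 0 ?ws (?T w) *v v" "JF Hf A mu w (?T w) *v v"]
      by (simp add: norm_minus_commute algebra_simps)
  qed
  have step: "norm (w + d - ?ws) \<le> th / cs * (norm (w - ?ws))\<^sup>2"
    if wd: "norm (w - ?ws) < \<delta>" and mu: "0 \<le> mu" "mu \<le> cs / 2" "mu \<le> rho * norm (?F w)"
      and sol: "JF Hf A mu w (?T w) *v d = - ?F w" for w mu d
  proof -
    let ?e = "w - ?ws"
    let ?Tw = "?T w"
    let ?x = "xpart w"
    let ?R = "g ?x - g xs - Hf ?x *v (?x - xs)"
    let ?J = "JF Hf A mu w ?Tw"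
    have FD: "?F w - Fv g A b ?ws ?Tw - JF Hf A 0 w ?Tw *v ?e = join ?R 0"
      using F_diff[of g A b w ?Tw ?ws Hf w] by simp
    hence FE: "?F w = JF Hf A 0 w ?Tw *v ?e + join ?R 0" using Fws[OF wd] by (simp add: algebra_simps)
    have JP: "?J *v ?e - JF Hf A 0 w ?Tw *v ?e = join 0 (- mu *\<^sub>R rG ?Tw (zpart ?e))"
      using J_pert[of Hf A mu w ?Tw ?e w] by simp
    have "w + d - ?ws = ?e + d" by simp
    hence "?J *v (w + d - ?ws) = ?J *v ?e + ?J *v d"
      by (simp only: matrix_vector_right_distrib)
    also have "\<dots> = join 0 (- mu *\<^sub>R rG ?Tw (zpart ?e)) - join ?R 0"
    proof -
      have JP': "?J *v ?e = join 0 (- mu *\<^sub>R rG ?Tw (zpart ?e)) + JF Hf A 0 w ?Tw *v ?e"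
        using JP by (simp only: diff_eq_eq)
      have gen: "\<And>a b c::real^('n+'m). (c + a) + - (a + b) = c - b" by (simp add: algebra_simps)
      show ?thesis unfolding JP' sol FE by (rule gen)
    qed
    finally have JE: "?J *v (w + d - ?ws) = join 0 (- mu *\<^sub>R rG ?Tw (zpart ?e)) - join ?R (0::real^'m)" .
    have nR: "norm ?R \<le> L * (norm ?e)\<^sup>2"
    proof -
      have hm: "Hf ?x *v (xs - ?x) = - (Hf ?x *v (?x - xs))" by (simp add: matrix_vector_mult_diff_distrib)
      have "?R = - (g xs - g ?x - Hf ?x *v (xs - ?x))"
        unfolding hm by simp
      hence "norm ?R = norm (g xs - g ?x - Hf ?x *v (xs - ?x))" by (metis norm_minus_cancel)
      also have "\<dots> \<le> L * (norm (xs - ?x))\<^sup>2"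
        by (rule taylor_bound[OF hess lip xb(1)[OF wd] xsb L0])
      also have "\<dots> \<le> L * (norm ?e)\<^sup>2"
        using xb(2)[OF wd] L0 by (intro mult_left_mono power_mono) (auto simp: norm_minus_commute)
      finally show ?thesis .
    qed
    have nZ: "norm (join (0::real^'n) (- mu *\<^sub>R rG ?Tw (zpart ?e))) \<le> mu * norm ?e"
    proof -
      have "norm (join (0::real^'n) (- mu *\<^sub>R rG ?Tw (zpart ?e))) \<le> norm (- mu *\<^sub>R rG ?Tw (zpart ?e))"
        using norm_join_le[of "0::real^'n" "- mu *\<^sub>R rG ?Tw (zpart ?e)"] by simp
      also have "\<dots> \<le> mu * norm ?e"
        using mu(1) norm_rG_le[of ?Tw "zpart ?e"] norm_zpart_le[of ?e]
        by (simp add: mult_left_mono)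
      finally show ?thesis .
    qed
    have nRj: "norm (join ?R (0::real^'m)) \<le> norm ?R" using norm_join_le[of ?R "0::real^'m"] by simp
    have muF: "mu * norm ?e \<le> rho * Cs * (norm ?e)\<^sup>2"
    proof -
      have "mu * norm ?e \<le> (rho * norm (?F w)) * norm ?e" using mu(3) by (intro mult_right_mono) auto
      also have "\<dots> \<le> (rho * (Cs * norm ?e)) * norm ?e"
        using Fb[OF wd] rho_pos by (intro mult_right_mono mult_left_mono) auto
      finally show ?thesis by (simp add: power2_eq_square mult_ac)
    qed
    have "cs * norm (w + d - ?ws) \<le> norm (?J *v (w + d - ?ws))"
      by (rule Jlow[OF wd mu(1,2)])
    also have "\<dots> \<le> mu * norm ?e + L * (norm ?e)\<^sup>2"
      unfolding JE using norm_triangle_ineq4[of "join (0::real^'n) (- mu *\<^sub>R rG ?Tw (zpart ?e))" "join ?R (0::real^'m)"]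
        nZ nRj nR by linarith
    also have "\<dots> \<le> th * (norm ?e)\<^sup>2"
    proof -
      have "th * (norm ?e)\<^sup>2 = L * (norm ?e)\<^sup>2 + 2 * (rho * Cs * (norm ?e)\<^sup>2)"
        by (simp add: th_def algebra_simps)
      moreover have "0 \<le> rho * Cs * (norm ?e)\<^sup>2" using rho_pos M1 Cs_eq by simp
      ultimately show ?thesis using muF by linarith
    qed
    finally show ?thesis using cs_pos by (simp add: field_simps)
  qed
  show ?thesis
  proof (rule exI[of _ \<delta>], intro conjI allI impI)
    show "\<delta> > 0" by (rule \<delta>pos)
  next
    fix w0 assume w0d: "dist w0 ?ws < \<delta>"
    define W where "W = newton_w g Hf A b tau lam alpha rho w0 mu0"
    define S where "S = (\<lambda>k. snd (newton_state g Hf A b tau lam alpha rho w0 mu0 k))"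
    define MU where "MU = newton_mu g Hf A b tau lam alpha rho w0 mu0"
    define D where "D = newton_d g Hf A b tau lam alpha rho w0 mu0"
    define a where "a = norm (w0 - ?ws)"
    have a_lt: "a < \<delta>" using w0d by (simp add: a_def dist_norm)
    have a0: "0 \<le> a" by (simp add: a_def)
    have W0: "W 0 = w0" by (simp add: W_def newton_w_0)
    have WS: "W (Suc k) = W k + D k" for k by (simp add: W_def D_def newton_w_Suc)
    have SS: "S (Suc k) = MU k" for k unfolding S_def MU_def by (rule newton_s_Suc)
    have S0: "S 0 = mu0" by (simp add: S_def)
    have MUd: "MU k = min (alpha * S k) (rho * norm (?F (W k)))" for k
      by (simp add: MU_def S_def W_def newton_mu_def mu_next_def)
    have Dd: "D k = (THE d. JF Hf A (MU k) (W k) (?T (W k)) *v d = - ?F (W k))" for k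
      by (simp add: D_def MU_def W_def newton_d_def newton_dir_def)
    have hk: "norm (W k - ?ws) < \<delta> \<and> 0 \<le> MU k \<and> MU k \<le> cs/2 \<and> MU k \<le> rho * norm (?F (W k))
        \<and> invertible (JF Hf A (MU k) (W k) (?T (W k)))
        \<and> JF Hf A (MU k) (W k) (?T (W k)) *v D k = - ?F (W k)
        \<and> norm (W (Suc k) - ?ws) \<le> th / cs * (norm (W k - ?ws))\<^sup>2"
      if ek: "norm (W k - ?ws) \<le> (1/2)^k * a" and sk: "0 \<le> S k" "S k \<le> cs/2" for k
    proof -
      have "(1/2::real)^k * a \<le> 1 * a" using a0 by (intro mult_right_mono) (auto simp: power_le_one)
      hence wd: "norm (W k - ?ws) < \<delta>" using ek a_lt by linarith
      have m0: "0 \<le> MU k" using sk alpha rho_pos by (simp add: MUd)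
      have m1: "MU k \<le> cs/2"
      proof -
        have "MU k \<le> alpha * S k" by (simp add: MUd)
        also have "\<dots> \<le> 1 * S k" using sk alpha by (intro mult_right_mono) auto
        finally show ?thesis using sk by simp
      qed
      have m2: "MU k \<le> rho * norm (?F (W k))" by (simp add: MUd)
      have iv: "invertible (JF Hf A (MU k) (W k) (?T (W k)))"
        by (rule lower_invertible[OF Jlow[OF wd m0 m1] cs_pos])
      have sol: "JF Hf A (MU k) (W k) (?T (W k)) *v D k = - ?F (W k)"
        unfolding Dd by (rule solve_the[OF iv])
      have st: "norm (W (Suc k) - ?ws) \<le> th / cs * (norm (W k - ?ws))\<^sup>2"
        unfolding WS by (rule step[OF wd m0 m1 m2 sol])
      show ?thesis using wd m0 m1 m2 iv sol st by blast
    qed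
    have inv: "norm (W k - ?ws) \<le> (1/2)^k * a \<and> 0 \<le> S k \<and> S k \<le> cs/2" for k
    proof (induction k)
      case 0 show ?case using mu0 by (simp add: W0 S0 a_def cs_def)
    next
      case (Suc k)
      hence ek: "norm (W k - ?ws) \<le> (1/2)^k * a" and sk: "0 \<le> S k" "S k \<le> cs/2" by auto
      note h = hk[OF ek sk]
      have "norm (W (Suc k) - ?ws) \<le> th / cs * (norm (W k - ?ws))\<^sup>2" using h by blast
      also have "\<dots> = (th / cs * norm (W k - ?ws)) * norm (W k - ?ws)" by (simp add: power2_eq_square)
      also have "\<dots> \<le> (1/2) * norm (W k - ?ws)"
      proof (rule mult_right_mono)
        have "th * norm (W k - ?ws) \<le> th * \<delta>" using h th_pos by (intro mult_left_mono) auto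
        hence "th * norm (W k - ?ws) \<le> cs / 2" using \<delta>th by linarith
        thus "th / cs * norm (W k - ?ws) \<le> 1/2" using cs_pos by (simp add: field_simps)
      qed simp
      also have "\<dots> \<le> (1/2) * ((1/2)^k * a)" using ek by simp
      finally show ?case using h by (simp add: SS)
    qed
    have H: "norm (W k - ?ws) < \<delta> \<and> 0 \<le> MU k \<and> MU k \<le> cs/2 \<and> MU k \<le> rho * norm (?F (W k))
        \<and> invertible (JF Hf A (MU k) (W k) (?T (W k)))
        \<and> JF Hf A (MU k) (W k) (?T (W k)) *v D k = - ?F (W k)
        \<and> norm (W (Suc k) - ?ws) \<le> th / cs * (norm (W k - ?ws))\<^sup>2" for k
      using hk inv by blast
    have ek: "norm (W k - ?ws) \<le> (1/2)^k * a" for k using inv by blast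
    have wdk: "norm (W k - ?ws) < \<delta>" for k using H by blast
    have Fk: "cs * norm (W k - ?ws) \<le> norm (?F (W k)) \<and> norm (?F (W k)) \<le> Cs * norm (W k - ?ws)" for k
      by (rule Fb[OF wdk])
    have stk: "norm (W (Suc k) - ?ws) \<le> th / cs * (norm (W k - ?ws))\<^sup>2" for k using H by blast
    have c1: "\<forall>k. invertible (JF Hf A (MU k) (W k) (?T (W k)))" using H by blast
    have c2: "\<forall>k. JF Hf A (MU k) (W k) (?T (W k)) *v D k = - ?F (W k) \<and> W (Suc k) = W k + D k"
      using H WS by blast
    have c4: "W \<longlonglongrightarrow> ?ws"
    proof -
      have lim0: "(\<lambda>k. (1/2::real)^k * a) \<longlonglongrightarrow> 0"
        by (intro tendsto_mult_left_zero LIMSEQ_power_zero) simp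
      have "(\<lambda>k. W k - ?ws) \<longlonglongrightarrow> 0"
        by (rule Lim_null_comparison[OF _ lim0]) (use ek in simp)
      thus ?thesis by (simp add: LIM_zero_iff)
    qed
    have c3: "D \<longlonglongrightarrow> 0"
    proof -
      have "(\<lambda>k. W (Suc k) - W k) \<longlonglongrightarrow> ?ws - ?ws"
        by (rule tendsto_diff[OF LIMSEQ_Suc[OF c4] c4])
      moreover have "(\<lambda>k. W (Suc k) - W k) = D" by (simp add: fun_eq_iff WS)
      ultimately show ?thesis by simp
    qed
    have c5: "\<forall>k. norm (W (Suc k) - ?ws) \<le> th / cs * (norm (W k - ?ws))\<^sup>2" using stk by blast
    have Fsuc: "norm (?F (W (Suc k))) \<le> Cs * (th / cs * (norm (W k - ?ws))\<^sup>2)" for k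
    proof -
      have "norm (?F (W (Suc k))) \<le> Cs * norm (W (Suc k) - ?ws)" using Fk by blast
      also have "\<dots> \<le> Cs * (th / cs * (norm (W k - ?ws))\<^sup>2)"
        using stk[of k] M1 Cs_eq by (intro mult_left_mono) auto
      finally show ?thesis .
    qed
    have Cspos: "Cs > 0" using M1 Cs_eq by simp
    have c6: "\<forall>k. norm (?F (W (Suc k))) \<le> th * Cs / cs ^ 3 * (norm (?F (W k)))\<^sup>2"
    proof
      fix k
      have ef: "norm (W k - ?ws) \<le> norm (?F (W k)) / cs" using Fk[of k] cs_pos by (simp add: field_simps)
      have "norm (?F (W (Suc k))) \<le> Cs * (th / cs * (norm (W k - ?ws))\<^sup>2)" by (rule Fsuc)
      also have "\<dots> \<le> Cs * (th / cs * (norm (?F (W k)) / cs)\<^sup>2)"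
        using ef Cspos th_pos cs_pos by (intro mult_left_mono power_mono) auto
      also have "\<dots> = th * Cs / cs ^ 3 * (norm (?F (W k)))\<^sup>2"
        by (rule arithA[OF cs_pos])
      finally show "norm (?F (W (Suc k))) \<le> th * Cs / cs ^ 3 * (norm (?F (W k)))\<^sup>2" .
    qed
    have c7: "\<forall>k\<ge>1. norm (?F (W k)) \<le> th * Cs ^ 3 / cs ^ 3 * 2 powr (2 - 2 * real k) * a\<^sup>2"
    proof (intro allI impI)
      fix k :: nat assume k1: "k \<ge> 1"
      then obtain j where kj: "k = Suc j" by (cases k) auto
      have p: "2 powr (2 - 2 * real k) = (1/2::real)^(2*j)"
      proof -
        have "2 - 2 * real k = - real (2*j)" by (simp add: kj)
        hence "2 powr (2 - 2 * real k) = inverse (2 powr real (2*j))" by (simp add: powr_minus)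
        also have "\<dots> = inverse (2 ^ (2*j))" using powr_realpow[of "2::real" "2*j"] by simp
        finally show ?thesis by (simp add: power_one_over inverse_eq_divide)
      qed
      have "norm (?F (W k)) \<le> Cs * (th / cs * (norm (W j - ?ws))\<^sup>2)" using Fsuc[of j] kj by simp
      also have "\<dots> \<le> Cs * (th / cs * ((1/2)^j * a)\<^sup>2)"
        using ek[of j] Cspos th_pos cs_pos by (intro mult_left_mono power_mono) auto
      also have "\<dots> = (th * Cs / cs) * (1/2::real)^(2*j) * a\<^sup>2"
        by (rule arithB)
      also have "\<dots> \<le> (th * Cs ^ 3 / cs ^ 3) * (1/2::real)^(2*j) * a\<^sup>2"
      proof (intro mult_right_mono)
        have "Cs / cs \<ge> 1" using cs1 Cs_eq M1 cs_pos by (simp add: field_simps)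
        hence "(Cs/cs) * 1 \<le> (Cs/cs) * (Cs/cs)^2"
          by (intro mult_left_mono) (auto simp: one_le_power)
        hence "th * (Cs/cs) \<le> th * ((Cs/cs) * (Cs/cs)^2)" using th_pos by (intro mult_left_mono) auto
        thus "th * Cs / cs \<le> th * Cs ^ 3 / cs ^ 3"
          by (simp add: power_divide power3_eq_cube power2_eq_square)
      qed auto
      finally show "norm (?F (W k)) \<le> th * Cs ^ 3 / cs ^ 3 * 2 powr (2 - 2 * real k) * a\<^sup>2"
        by (simp add: p)
    qed
    have c8: "\<forall>\<epsilon>>0. w0 \<noteq> ?ws \<longrightarrow> (\<forall>k. 1 \<le> k \<and>
                 \<lceil>log 2 (2 * sqrt (th * (Cs / cs) ^ 3) * a) - log 2 (sqrt \<epsilon>)\<rceil> \<le> int k \<longrightarrow>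
                 norm (?F (W k)) \<le> \<epsilon>)"
    proof (intro allI impI)
      fix \<epsilon> :: real and k :: nat
      assume ep: "\<epsilon> > 0" and wne: "w0 \<noteq> ?ws"
        and kk: "1 \<le> k \<and> \<lceil>log 2 (2 * sqrt (th * (Cs / cs) ^ 3) * a) - log 2 (sqrt \<epsilon>)\<rceil> \<le> int k"
      define K where "K = th * (Cs / cs) ^ 3"
      have Kpos: "K > 0" using th_pos Cspos cs_pos by (simp add: K_def)
      have apos: "a > 0" using wne by (simp add: a_def)
      have KK: "th * Cs ^ 3 / cs ^ 3 = K" by (simp add: K_def power_divide)
      have q: "log 2 (2 * sqrt K * a) - log 2 (sqrt \<epsilon>) \<le> real k"
        using kk by (simp add: K_def ceiling_le_iff)
      have "log 2 (2 * sqrt K * a / sqrt \<epsilon>) = log 2 (2 * sqrt K * a) - log 2 (sqrt \<epsilon>)"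
        using Kpos apos ep by (simp add: log_divide)
      hence "log 2 (2 * sqrt K * a / sqrt \<epsilon>) \<le> real k" using q by simp
      hence le1: "2 * sqrt K * a / sqrt \<epsilon> \<le> 2 powr real k"
        using Kpos apos ep by (simp add: log_le_iff)
      have "(2 * sqrt K * a / sqrt \<epsilon>)\<^sup>2 \<le> (2 powr real k)\<^sup>2"
        using le1 Kpos apos ep by (intro power_mono) auto
      hence le2: "4 * K * a\<^sup>2 / \<epsilon> \<le> 2 powr (2 * real k)"
        by (rule arithC[OF Kpos ep])
      have p2: "2 powr (2 - 2 * real k) = 4 / 2 powr (2 * real k)"
        by (simp add: powr_diff)
      have "K * 2 powr (2 - 2 * real k) * a\<^sup>2 = 4 * K * a\<^sup>2 / 2 powr (2 * real k)"
        by (simp add: p2)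
      also have "\<dots> \<le> \<epsilon>" using le2 ep by (simp add: field_simps)
      finally have "K * 2 powr (2 - 2 * real k) * a\<^sup>2 \<le> \<epsilon>" .
      moreover have "norm (?F (W k)) \<le> K * 2 powr (2 - 2 * real k) * a\<^sup>2"
        using c7 kk KK by auto
      ultimately show "norm (?F (W k)) \<le> \<epsilon>" by linarith
    qed
    show "let ws = join xs zs; Cs = C_star Hf A b xs; cs = c_star Hf A b xs;
         th = L + 2 * rho * Cs;
         w = newton_w g Hf A b tau lam alpha rho w0 mu0;
         T = newton_T g Hf A b tau lam alpha rho w0 mu0;
         mu = newton_mu g Hf A b tau lam alpha rho w0 mu0;
         d = newton_d g Hf A b tau lam alpha rho w0 mu0;
         Fk = (\<lambda>k. Fv g A b (w k) (T k))
     in (\<forall>k. invertible (JF Hf A (mu k) (w k) (T k))) \<and>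
        (\<forall>k. JF Hf A (mu k) (w k) (T k) *v d k = - Fk k \<and> w (Suc k) = w k + d k) \<and>
        d \<longlonglongrightarrow> 0 \<and> w \<longlonglongrightarrow> ws \<and>
        (\<forall>k. norm (w (Suc k) - ws) \<le> (th / cs) * (norm (w k - ws))\<^sup>2) \<and>
        (\<forall>k. norm (Fk (Suc k)) \<le> th * Cs / cs ^ 3 * (norm (Fk k))\<^sup>2) \<and>
        (\<forall>k\<ge>1. norm (Fk k) \<le> th * Cs ^ 3 / cs ^ 3 * 2 powr (2 - 2 * real k) * (norm (w0 - ws))\<^sup>2) \<and>
        (\<forall>\<epsilon>>0. w0 \<noteq> ws \<longrightarrow> (\<forall>k. k \<ge> 1 \<and>
            int k \<ge> \<lceil>log 2 (2 * sqrt (th * (Cs / cs) ^ 3) * norm (w0 - ws)) - log 2 (sqrt \<epsilon>)\<rceil>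
            \<longrightarrow> norm (Fk k) \<le> \<epsilon>))"
      unfolding Let_def newton_T_def W_def[symmetric] MU_def[symmetric] D_def[symmetric]
        cs_def[symmetric] Cs_def[symmetric] th_def[symmetric] a_def[symmetric]
      using c1 c2 c3 c4 c5 c6 c7 c8 by blast
  qed
qed

end
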